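(* Let $(X,d,\mu)$ be a metric measure space satisfying $\mathrm{BG}(k,n)$ with constant $C=1$ for some $k\in\mathbb{R}$ and $n\ge1$. Then $\mu(S_r(x))=0$ for all $x\in X$ and all $r>0$, where $S_r(x)=\{y\in X: d(x,y)=r\}$. In particular, if $X$ does not consist of a single point, then $\mu(\{x\})=0$ for all $x\in X$.
   Context: A metric measure space $(X,d,\mu)$ means a complete, locally compact length space $(X,d)$ equipped with a Borel measure $\mu$. $B_r(x)$ and $\overline B_r(x)$ denote the open and closed balls of radius $r$ about $x$. For $k\in\mathbb{R}$ let $\mathsf s_k(t)=\sin(\sqrt{k}\,t)/\sqrt{k}$ if $k>0$, $\mathsf s_k(t)=t$ if $k=0$, $\mathsf s_k(t)=\sinh(\sqrt{-k}\,t)/\sqrt{-k}$ if $k<0$. For real $n\ge1$ and $0\le r_1<r_2$ set $V_{k,n}(r_1,r_2)=\alpha_{n-1}\int_{r_1}^{r_2}\mathsf s_k(t)^{n-1}\,dt$ with $\alpha_{n-1}=2\pi^{n/2}/\Gamma(n/2)$. For $x\in X$ let $A_{r_1,r_2}(x)=B_{r_2}(x)\setminus\overline B_{r_1}(x)$ and $A_{0,r}(x)=B_r(x)$. For a measurable $U\subset A_{r_1,r_2}(x)$ and $0\le s_1<s_2$ with $s_1\le r_1$, $s_2\le r_2$, let $S_{s_1,s_2}(x,U)=\{y\in A_{s_1,s_2}(x): d(x,y)+d(y,z)=d(x,z)\text{ for some }z\in U\}$. $(X,d,\mu)$ satisfies $\mathrm{BG}(k,n)$ with constant $C\ge1$ if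 for every $x\in X$, all $0\le r_1<r_2$, $0\le s_1<s_2$ with $s_1\le r_1$, $s_2\le r_2$, and every measurable $U\subset A_{r_1,r_2}(x)$, one has $\mu(U)/\mu(S_{s_1,s_2}(x,U))\le C\,V_{k,n}(r_1,r_2)/V_{k,n}(s_1,s_2)$. *)

theory Defs
  imports "HOL-Analysis.Analysis" "HOL-Probability.Probability"
begin

definition curve_length :: "(real \<Rightarrow> 'a::metric_space) \<Rightarrow> real \<Rightarrow> real \<Rightarrow> ereal" where
  "curve_length \<gamma> a b = (SUP p \<in> {(m, t). t 0 = a \<and> t m = b \<and> (\<forall>i<m. t i \<le> t (Suc i))}.
        ereal (\<Sum>i<fst p. dist (\<gamma> (snd p i)) (\<gamma> (snd p (Suc i)))))"

definition length_space :: "'a::metric_space itself \<Rightarrow> bool" where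
  "length_space _ \<longleftrightarrow> (\<forall>x y::'a. ereal (dist x y) =
      (INF \<gamma> \<in> {\<gamma>. continuous_on {0..1} \<gamma> \<and> \<gamma> 0 = x \<and> \<gamma> 1 = y}. curve_length \<gamma> 0 1))"

definition sk :: "real \<Rightarrow> real \<Rightarrow> real" where
  "sk k t = (if k > 0 then sin (sqrt k * t) / sqrt k
             else if k = 0 then t else sinh (sqrt (- k) * t) / sqrt (- k))"

(* s_k(t)^(n-1); base clipped at 0 so that the real power is defined, and x^0 = 1 *)
definition sk_pow :: "real \<Rightarrow> real \<Rightarrow> real \<Rightarrow> real" where
  "sk_pow k n t = (if n = 1 then 1 else (max 0 (sk k t)) powr (n - 1))"

definition alpha :: "real \<Rightarrow> real" where
  "alpha n = 2 * pi powr (n / 2) / Gamma (n / 2)"   (* this is alpha_{n-1} *)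

definition Vkn :: "real \<Rightarrow> real \<Rightarrow> real \<Rightarrow> real \<Rightarrow> real" where
  "Vkn k n r1 r2 = alpha n * integral {r1..r2} (\<lambda>t. sk_pow k n t)"

definition annulus :: "'a::metric_space \<Rightarrow> real \<Rightarrow> real \<Rightarrow> 'a set" where
  "annulus x r1 r2 = (if r1 = 0 then ball x r2 else ball x r2 - cball x r1)"

definition Sset :: "'a::metric_space \<Rightarrow> real \<Rightarrow> real \<Rightarrow> 'a set \<Rightarrow> 'a set" where
  "Sset x s1 s2 U = {y \<in> annulus x s1 s2. \<exists>z\<in>U. dist x y + dist y z = dist x z}"

(* outer measure (S need not be Borel) *)
definition outer_mu :: "'a measure \<Rightarrow> 'a set \<Rightarrow> ennreal" where
  "outer_mu M A = (INF B \<in> {B \<in> sets M. A \<subseteq> B}. emeasure M B)"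

(* BG(k,n) with constant C; the ratio inequality mu(U)/mu(S) <= C V(r)/V(s) written multiplied out *)
definition BG :: "'a::metric_space measure \<Rightarrow> real \<Rightarrow> real \<Rightarrow> real \<Rightarrow> bool" where
  "BG M k n C \<longleftrightarrow> (\<forall>x r1 r2 s1 s2 U. 0 \<le> r1 \<longrightarrow> r1 < r2 \<longrightarrow> 0 \<le> s1 \<longrightarrow> s1 < s2 \<longrightarrow>
      s1 \<le> r1 \<longrightarrow> s2 \<le> r2 \<longrightarrow> U \<in> sets M \<longrightarrow> U \<subseteq> annulus x r1 r2 \<longrightarrow>
      emeasure M U * ennreal (Vkn k n s1 s2) \<le> ennreal (C * Vkn k n r1 r2) * outer_mu M (Sset x s1 s2 U))"

end

theory Submission
  imports Defs
begin

lemma sk_cont: "continuous_on A (sk k)"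
proof -
  consider "k > 0" | "k = 0" | "k < 0" by linarith
  then show ?thesis
  proof cases
    case 1 then show ?thesis unfolding sk_def by (simp add: continuous_intros)
  next
    case 2 then show ?thesis unfolding sk_def by (simp add: continuous_intros)
  next
    case 3 then show ?thesis unfolding sk_def by (simp add: continuous_intros)
  qed
qed

lemma sk_pow_cont: "n \<ge> 1 \<Longrightarrow> continuous_on A (sk_pow k n)"
proof (cases "n = 1")
  case True then show ?thesis unfolding sk_pow_def by simp
next
  case False
  assume "n \<ge> 1"
  then have "continuous_on A (\<lambda>t. (max 0 (sk k t)) powr (n - 1))"
    using False by (intro continuous_on_powr' continuous_on_max continuous_on_const sk_cont) auto
  then show ?thesis unfolding sk_pow_def using False by simp
qed

lemma sk_pow_nonneg: "sk_pow k n t \<ge> 0"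
  unfolding sk_pow_def by simp

lemma sk_pos_point: assumes "r > 0" shows "\<exists>t. 0 < t \<and> t < r \<and> sk k t > 0"
proof -
  consider "k > 0" | "k = 0" | "k < 0" by linarith
  then show ?thesis
  proof cases
    case 1
    define m where "m = min r (pi / sqrt k)"
    define t where "t = m / 2"
    have pk: "pi / sqrt k > 0" using 1 by simp
    have m: "0 < m" "m \<le> r" "m \<le> pi / sqrt k"
      using pk assms unfolding m_def by auto
    have t: "0 < t" "t < r" "t < pi / sqrt k" using m unfolding t_def by linarith+
    have "sqrt k * t < pi" using t(3) 1 by (simp add: field_simps)
    moreover have "0 < sqrt k * t" using 1 t by simp
    ultimately have "sin (sqrt k * t) > 0" by (intro sin_gt_zero) auto
    then show ?thesis using t 1 by (intro exI[of _ t]) (auto simp: sk_def)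
  next
    case 2 then show ?thesis using assms by (intro exI[of _ "r/2"]) (auto simp: sk_def)
  next
    case 3 then show ?thesis using assms
      by (intro exI[of _ "r/2"]) (auto simp: sk_def sinh_real_pos_iff)
  qed
qed

lemma sk_pow_pos: "sk k t > 0 \<Longrightarrow> sk_pow k n t > 0"
  unfolding sk_pow_def by auto

lemma alpha_pos: "n \<ge> 1 \<Longrightarrow> alpha n > 0"
  unfolding alpha_def by (intro divide_pos_pos) auto

lemma V_pos:
  assumes "n \<ge> 1" "r > 0" shows "Vkn k n 0 r > 0"
proof -
  obtain t where t: "0 < t" "t < r" "sk k t > 0" using sk_pos_point[OF assms(2)] by blast
  have int: "sk_pow k n integrable_on {0..r}"
    by (intro integrable_continuous_real sk_pow_cont assms)
  have nn: "integral {0..r} (sk_pow k n) \<ge> 0"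
    by (intro integral_nonneg int sk_pow_nonneg)
  have "integral {0..r} (sk_pow k n) \<noteq> 0"
  proof
    assume z: "integral {0..r} (sk_pow k n) = 0"
    have cl: "closure {0<..<r} = {0..r}" using assms by simp
    have h0: "(sk_pow k n has_integral 0) (closure {0<..<r})"
      using integrable_integral[OF int] z by (simp add: cl)
    have "sk_pow k n t = 0"
      apply (rule has_integral_0_closure_imp_0[of "{0<..<r}" "sk_pow k n", OF _ _ _ _ _ _ h0])
      using assms t by (auto simp: sk_pow_nonneg cl intro!: sk_pow_cont)
    then show False using sk_pow_pos[OF t(3), of n] by simp
  qed
  then show ?thesis using nn alpha_pos[OF assms(1)] unfolding Vkn_def by simp
qed

lemma V_cont:
  assumes "n \<ge> 1" "r > 0" shows "((\<lambda>r2. Vkn k n 0 r2) \<longlongrightarrow> Vkn k n 0 r) (at_right r)"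
proof -
  have int: "sk_pow k n integrable_on {0..r+1}"
    by (intro integrable_continuous_real sk_pow_cont assms)
  have "continuous_on {0..r+1} (\<lambda>x. integral {0..x} (sk_pow k n))"
    by (rule indefinite_integral_continuous_1[OF int])
  then have "((\<lambda>x. integral {0..x} (sk_pow k n)) \<longlongrightarrow> integral {0..r} (sk_pow k n)) (at r within {0..r+1})"
    using assms by (simp add: continuous_on_def)
  then have "((\<lambda>x. integral {0..x} (sk_pow k n)) \<longlongrightarrow> integral {0..r} (sk_pow k n)) (at r within {r..r+1})"
    by (rule tendsto_within_subset) (use assms in auto)
  then have "((\<lambda>x. integral {0..x} (sk_pow k n)) \<longlongrightarrow> integral {0..r} (sk_pow k n)) (at_right r)"
    using at_within_Icc_at_right[of r "r+1"] by simp
  then show ?thesis unfolding Vkn_def by (intro tendsto_mult tendsto_const)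
qed


theorem lemma3p6:
  fixes M :: "'a::{metric_space, complete_space} measure" and k n :: real
  assumes "locally compact (UNIV :: 'a set)"
    and "length_space TYPE('a)"
    and "sets M = sets borel"
    and "\<And>x r. emeasure M (ball x r) < \<infinity>"
    and "n \<ge> 1"
    and "BG M k n 1"
  shows "(\<forall>x r. r > 0 \<longrightarrow> emeasure M {y. dist x y = r} = 0) \<and>
         ((\<exists>a b::'a. a \<noteq> b) \<longrightarrow> (\<forall>x. emeasure M {x} = 0))"
proof -
  have sph: "emeasure M {y. dist x y = r} = 0" if r: "r > 0" for x r
  proof -
    define S where "S = {y. dist x y = r}"
    have Ssets: "S \<in> sets M"
    proof -
      have "closed S" unfolding S_def by (intro closed_Collect_eq continuous_intros)
      then show ?thesis using assms(3) by (simp add: borel_closed)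
    qed
    have Bsets: "ball x r' \<in> sets M" for r' using assms(3) by (simp add: borel_closed)
    have Sfin: "emeasure M S < \<infinity>"
    proof -
      have "S \<subseteq> ball x (r+1)" unfolding S_def by auto
      then have "emeasure M S \<le> emeasure M (ball x (r+1))" by (intro emeasure_mono Bsets)
      then show ?thesis using assms(4)[of x "r+1"] by simp
    qed
    define a where "a = measure M (ball x r)"
    define b where "b = measure M S"
    define v where "v = Vkn k n 0 r"
    have ea: "emeasure M (ball x r) = ennreal a"
      unfolding a_def using assms(4)[of x r] by (intro emeasure_eq_ennreal_measure) auto
    have eb: "emeasure M S = ennreal b"
      unfolding b_def using Sfin by (intro emeasure_eq_ennreal_measure) auto
    have a0: "a \<ge> 0" "b \<ge> 0" unfolding a_def b_def by auto
    have v0: "v > 0" unfolding v_def using V_pos[OF assms(5) r] .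
    have ineq: "(a + b) * v \<le> Vkn k n 0 r2 * a" if r2: "r < r2" for r2
    proof -
      have v2: "Vkn k n 0 r2 > 0" using V_pos[OF assms(5)] r r2 by simp
      have bg: "emeasure M (ball x r2) * ennreal v \<le> ennreal (1 * Vkn k n 0 r2) * outer_mu M (Sset x 0 r (ball x r2))"
        using assms(6)[unfolded BG_def, rule_format, of 0 r2 0 r "ball x r2" x] r r2 Bsets[of r2]
        unfolding v_def by (simp add: annulus_def)
      have "Sset x 0 r (ball x r2) \<subseteq> ball x r" unfolding Sset_def annulus_def by auto
      then have om: "outer_mu M (Sset x 0 r (ball x r2)) \<le> emeasure M (ball x r)"
        unfolding outer_mu_def using Bsets by (intro INF_lower) auto
      have "emeasure M (ball x r) + emeasure M S = emeasure M (ball x r \<union> S)"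
        by (intro plus_emeasure Bsets Ssets) (auto simp: S_def)
      also have "\<dots> \<le> emeasure M (ball x r2)"
        using r2 by (intro emeasure_mono Bsets) (auto simp: S_def)
      finally have "ennreal (a + b) \<le> emeasure M (ball x r2)" using ea eb a0 by (simp add: ennreal_plus)
      then have "ennreal (a + b) * ennreal v \<le> emeasure M (ball x r2) * ennreal v"
        by (intro mult_right_mono) auto
      also have "\<dots> \<le> ennreal (Vkn k n 0 r2) * emeasure M (ball x r)"
        using bg om by (simp add: mult_left_mono order_trans)
      finally have "ennreal ((a + b) * v) \<le> ennreal (Vkn k n 0 r2 * a)"
        using ea a0 v0 v2 by (simp add: ennreal_mult'')
      then show ?thesis using a0 v2 by (simp add: ennreal_le_iff)
    qed
    have "(a + b) * v \<le> v * a"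
    proof (rule tendsto_le[of "at_right r"])
      show "at_right r \<noteq> bot" by simp
      show "((\<lambda>r2. Vkn k n 0 r2 * a) \<longlongrightarrow> v * a) (at_right r)"
        unfolding v_def by (intro tendsto_mult V_cont assms(5) r tendsto_const)
      show "((\<lambda>r2. (a + b) * v) \<longlongrightarrow> (a + b) * v) (at_right r)" by simp
      show "\<forall>\<^sub>F r2 in at_right r. (a + b) * v \<le> Vkn k n 0 r2 * a"
        using eventually_at_right_less[of r] by (rule eventually_mono) (rule ineq)
    qed
    then have "b * v \<le> 0" by (simp add: algebra_simps)
    then have "b = 0" using v0 a0 by (simp add: mult_le_0_iff)
    then show ?thesis using eb unfolding S_def by simp
  qed
  moreover have "emeasure M {x} = 0" if ab: "\<exists>a b::'a. a \<noteq> b" for x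
  proof -
    obtain y where y: "y \<noteq> x" using ab by metis
    have "{x} \<subseteq> {z. dist y z = dist y x}" by auto
    then have "emeasure M {x} \<le> emeasure M {z. dist y z = dist y x}"
    proof (intro emeasure_mono)
      have "closed {z. dist y z = dist y x}" by (intro closed_Collect_eq continuous_intros)
      then show "{z. dist y z = dist y x} \<in> sets M" using assms(3) by (simp add: borel_closed)
    qed
    also have "\<dots> = 0" using sph y by simp
    finally show ?thesis by simp
  qed
  ultimately show ?thesis by blast
qed

end
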